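(* Let $a<0$ and $\mu=\frac{1}{1-a}\in(0,1)$. Define $$\bar\Omega_a(X)=-\sin(\pi\mu)\,\frac{\mathbf 1_{\{X>1\}}}{|1-X|^{\mu}},\qquad \bar c_{l,a}=1-a,\qquad \bar c_{\omega,a}=-1.$$ Then $\mathcal H(\bar\Omega_a)(X)=\frac{\mathbf 1_{\{X<1\}}+\mathbf 1_{\{X>1\}}\cos(\pi\mu)}{|1-X|^{\mu}}$, and with $\bar U_a(X)=\int_0^X\mathcal H(\bar\Omega_a)(Y)\,dY$, the triple $(\bar\Omega_a,\bar c_{l,a},\bar c_{\omega,a})$ solves the self-similar profile equation $$(\bar c_{l,a}X+a\bar U_a)\,(\bar\Omega_a)_X=(\bar c_{\omega,a}+(\bar U_a)_X)\,\bar\Omega_a$$ at every $X\ne1$.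
   Context: $\mathcal H$ denotes the Hilbert transform on $\mathbb R$: $\mathcal H(f)(x)=\frac1\pi\,\mathrm{P.V.}\int_{\mathbb R}\frac{f(y)}{x-y}\,dy$. $\mathbf 1_{A}$ is the indicator of the set $A$. *)

theory Defs
  imports "HOL-Analysis.Analysis"
begin

definition has_Hilbert_transform :: "(real \<Rightarrow> real) \<Rightarrow> real \<Rightarrow> real \<Rightarrow> bool" where
  "has_Hilbert_transform f x v \<longleftrightarrow>
     (\<forall>\<epsilon>>0. set_integrable lborel {y. \<epsilon> < \<bar>x - y\<bar>} (\<lambda>y. f y / (x - y))) \<and>
     ((\<lambda>\<epsilon>. (1 / pi) * (LINT y:{y. \<epsilon> < \<bar>x - y\<bar>}|lborel. f y / (x - y))) \<longlongrightarrow> v) (at_right 0)"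

definition Hilbert_transform :: "(real \<Rightarrow> real) \<Rightarrow> real \<Rightarrow> real" where
  "Hilbert_transform f x = (THE v. has_Hilbert_transform f x v)"

end

theory Submission imports Defs begin

lemma pow_int01:
  fixes a :: real assumes a: "a > 0"
  shows "set_integrable lborel (einterval 0 1) (\<lambda>u. u powr (a-1))"
    "(LBINT u=0..1. u powr (a-1)) = 1/a"
proof -
  let ?F = "\<lambda>u::real. u powr a / a"
  have d: "(?F has_real_derivative u powr (a-1)) (at u)" if "0 < u" for u
    using that a by (auto intro!: derivative_eq_intros simp: field_simps powr_diff)
  have c: "isCont (\<lambda>u. u powr (a-1)) u" if "0 < u" for u
    using that by (auto intro!: continuous_intros)
  have A: "((?F \<circ> real_of_ereal) \<longlongrightarrow> 0) (at_right (ereal 0))"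
    unfolding ereal_tendsto_simps1
    using a by (auto intro!: tendsto_eq_intros tendsto_zero_powrI eventually_at_rightI[of 0 1])
  have B: "((?F \<circ> real_of_ereal) \<longlongrightarrow> 1/a) (at_left (ereal 1))"
    unfolding ereal_tendsto_simps1
    using a by (auto intro!: tendsto_eq_intros)
  note r = interval_integral_FTC_nonneg[where a=0 and b=1 and F="?F" and f="\<lambda>u. u powr (a-1)" and A=0 and B="1/a"]
  show "set_integrable lborel (einterval 0 1) (\<lambda>u. u powr (a-1))"
    "(LBINT u=0..1. u powr (a-1)) = 1/a"
    using r d c A B by (auto simp: zero_ereal_def one_ereal_def)
qed

lemma Ppow_int:
  fixes p r :: real assumes p: "p > 0" and r: "0 < r" "r < 1"
  shows "set_integrable lborel (einterval 0 r) (\<lambda>u. u powr (p-1) / (1-u))"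
proof -
  have i: "set_integrable lborel (einterval 0 r) (\<lambda>u. u powr (p-1))"
    by (rule set_integrable_subset[OF pow_int01(1)[OF p]]) (use r in \<open>auto simp: einterval_iff\<close>)
  have i2: "set_integrable lborel (einterval 0 r) (\<lambda>u. u powr (p-1) / (1-r))"
    using i by simp
  show ?thesis
  proof (rule set_integrable_bound[OF i2])
    show "set_borel_measurable lborel (einterval 0 r) (\<lambda>u. u powr (p - 1) / (1 - u))"
      unfolding set_borel_measurable_def by measurable
    show "AE x in lborel. x \<in> einterval 0 r \<longrightarrow> norm (x powr (p - 1) / (1 - x)) \<le> norm (x powr (p - 1) / (1 - r))"
    proof (rule AE_I2, rule impI)
      fix x assume "x \<in> einterval 0 r"
      then have x: "0 < x" "x < r" by (auto simp: einterval_iff)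
      then show "norm (x powr (p - 1) / (1 - x)) \<le> norm (x powr (p - 1) / (1 - r))"
        using r by (auto simp: divide_simps intro!: mult_left_mono)
    qed
  qed
qed

lemma Gamma_refl_real:
  fixes m :: real assumes "0 < m" "m < 1"
  shows "Gamma m * Gamma (1 - m) = pi / sin (pi * m)"
proof -
  have "complex_of_real (Gamma m * Gamma (1 - m)) = Gamma (complex_of_real m) * Gamma (1 - complex_of_real m)"
    using Gamma_complex_of_real[of "1-m"] by (simp add: Gamma_complex_of_real)
  also have "\<dots> = of_real pi / sin (of_real pi * of_real m)"
    by (rule Gamma_reflection_complex)
  also have "\<dots> = complex_of_real (pi / sin (pi * m))"
    by (simp flip: sin_of_real)
  finally show ?thesis by (simp only: of_real_eq_iff)
qed

lemma Beta_int:
  fixes m :: real assumes m: "0 < m" "m < 1"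
  shows "set_integrable lborel (einterval 0 1) (\<lambda>v. v powr (-m) * (1-v) powr (m-1))"
    "(LBINT v=0..1. v powr (-m) * (1-v) powr (m-1)) = pi / sin (pi * m)"
proof -
  have i: "set_integrable lborel {0..1} (\<lambda>v. v powr ((1-m)-1) * (1-v) powr (m-1))"
    using m by (intro integrable_Beta) auto
  have e: "(\<lambda>v::real. v powr ((1-m)-1) * (1-v) powr (m-1)) = (\<lambda>v. v powr (-m) * (1-v) powr (m-1))"
    by simp
  from i show "set_integrable lborel (einterval 0 1) (\<lambda>v. v powr (-m) * (1-v) powr (m-1))"
    unfolding e by (rule set_integrable_subset) (auto simp: einterval_iff)
  have "(LBINT v=0..1. v powr (-m) * (1-v) powr (m-1)) = (LBINT v=ereal 0..ereal 1. v powr ((1-m)-1) * (1-v) powr (m-1))"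
    by (simp add: zero_ereal_def one_ereal_def)
  also have "\<dots> = (LBINT v:{0..1}. v powr ((1-m)-1) * (1-v) powr (m-1))"
    by (rule interval_integral_Icc) simp
  also have "\<dots> = integral {0..1} (\<lambda>v. v powr ((1-m)-1) * (1-v) powr (m-1))"
    by (rule set_borel_integral_eq_integral(2)[OF i])
  also have "\<dots> = Beta (1-m) m"
    using m by (intro integral_unique has_integral_Beta_real) auto
  also have "\<dots> = pi / sin (pi * m)"
    using Gamma_refl_real[OF m] by (simp add: Beta_def mult.commute)
  finally show "(LBINT v=0..1. v powr (-m) * (1-v) powr (m-1)) = pi / sin (pi * m)" .
qed

lemma S1_alg:
  fixes m s v :: real assumes "0 < s" "0 < v" "v < 1"
  shows "inverse ((1 + s * v/(1-v) - 1) powr m * (1 + s * v/(1-v) - (1 - s))) * (s / (1-v)^2)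
     = s powr (-m) * (v powr (-m) * (1-v) powr (m-1))"
proof -
  have e1: "1 + s * v/(1-v) - 1 = s * v / (1-v)" by simp
  have e2: "1 + s * v/(1-v) - (1 - s) = s / (1-v)" using assms by (simp add: field_simps)
  have p: "(s * v / (1-v)) powr m = s powr m * v powr m / (1-v) powr m"
    using assms by (simp add: powr_mult powr_divide)
  have q: "(1-v) powr (m-1) = (1-v) powr m / (1-v)" using assms by (simp add: powr_diff)
  have pos: "s powr m > 0" "v powr m > 0" "(1-v) powr m > 0" using assms by auto
  have gen: "inverse (A * B / C * (s / w)) * (s / w^2) = inverse A * (inverse B * (C / w))"
    if "A > 0" "B > 0" "C > 0" "w > 0" for A B C w :: real
    using that assms by (simp add: field_simps power2_eq_square)
  show ?thesis unfolding e1 e2 p q powr_minus using assms pos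
    by (intro gen) auto
qed

lemma S1:
  fixes m s :: real assumes m: "0 < m" "m < 1" and s: "0 < s"
  defines "f \<equiv> \<lambda>y. inverse ((y - 1) powr m * (y - (1 - s)))"
  shows "set_integrable lborel (einterval 1 \<infinity>) f"
    "(LBINT y=1..\<infinity>. f y) = s powr (-m) * (pi / sin (pi * m))"
proof -
  define g where "g = (\<lambda>v::real. 1 + s * v/(1-v))"
  define g' where "g' = (\<lambda>v::real. s / (1-v)^2)"
  have eq: "f (g v) * g' v = s powr (-m) * (v powr (-m) * (1-v) powr (m-1))" if "v \<in> einterval 0 1" for v
    using that S1_alg[OF s, of v m] by (simp add: f_def g_def g'_def einterval_iff)
  have int: "set_integrable lborel (einterval 0 1) (\<lambda>v. f (g v) * g' v)"
    by (subst set_integrable_cong[OF refl refl eq]) (auto intro: Beta_int[OF m])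
  have val: "(LBINT v=0..1. f (g v) * g' v) = s powr (-m) * (pi / sin (pi * m))"
  proof -
    have "(LBINT v=0..1. f (g v) * g' v) = (LBINT v=0..1. s powr (-m) * (v powr (-m) * (1-v) powr (m-1)))"
      by (rule interval_integral_cong) (use eq in auto)
    also have "\<dots> = s powr (-m) * (pi / sin (pi * m))"
      using Beta_int(2)[OF m] by simp
    finally show ?thesis .
  qed
  have A: "((ereal \<circ> g \<circ> real_of_ereal) \<longlongrightarrow> ereal 1) (at_right 0)"
    unfolding zero_ereal_def o_assoc[symmetric] ereal_tendsto_simps1 ereal_tendsto_simps2 g_def
    by (auto intro!: tendsto_eq_intros)
  have lim: "filterlim g at_top (at_left 1)"
    unfolding g_def using s by real_asymp
  have B: "((ereal \<circ> g \<circ> real_of_ereal) \<longlongrightarrow> \<infinity>) (at_left 1)"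
    unfolding one_ereal_def o_assoc[symmetric] ereal_tendsto_simps2 at_left_ereal filterlim_filtermap
    using lim ereal_tendsto_simps2(2)[of g] by (simp add: o_def)
  note r = interval_integral_substitution_nonneg[where a=0 and b=1 and f=f and g=g and g'=g' and A="ereal 1" and B=\<infinity>]
  have h0: "(0::ereal) < 1" by simp
  have d1: "DERIV g x :> g' x" if "0 < ereal x" "ereal x < 1" for x
    using that unfolding g_def g'_def
    by (auto intro!: derivative_eq_intros simp: field_simps power2_eq_square zero_ereal_def one_ereal_def)
  have gx: "g x > 1" if "0 < ereal x" "ereal x < 1" for x
    using that s by (simp add: g_def zero_ereal_def one_ereal_def)
  have d2: "isCont f (g x)" if "0 < ereal x" "ereal x < 1" for x
  proof -
    have "g x > 1" using gx that by auto
    then have "(g x - 1) powr m * (g x - (1 - s)) \<noteq> 0" using s by auto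
    then show ?thesis unfolding f_def using \<open>g x > 1\<close>
      by (intro continuous_intros) auto
  qed
  have d3: "isCont g' x" if "0 < ereal x" "ereal x < 1" for x
    using that unfolding g'_def by (auto intro!: continuous_intros simp: zero_ereal_def one_ereal_def)
  have d4: "0 \<le> f (g x)" if "0 < ereal x" "ereal x < 1" for x
  proof -
    have "g x > 1" using gx that by auto
    then show ?thesis unfolding f_def using s by simp
  qed
  have d5: "0 \<le> g' x" if "0 \<le> ereal x" "ereal x \<le> 1" for x unfolding g'_def using s by simp
  have int': "set_integrable lborel (einterval (ereal 0) (ereal 1)) (\<lambda>v. f (g v) * g' v)"
    using int by (simp add: zero_ereal_def one_ereal_def)
  note rr = r[OF h0 d1 d2 d3 d4 d5 A B int]
  have conds: "set_integrable lborel (einterval 1 \<infinity>) f \<and> (LBINT x=1..\<infinity>. f x) = (LBINT x=0..1. f (g x) * g' x)"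
    using rr by (simp add: one_ereal_def)
  then show "set_integrable lborel (einterval 1 \<infinity>) f"
    "(LBINT y=1..\<infinity>. f y) = s powr (-m) * (pi / sin (pi * m))"
    using val by auto
qed

lemma S2:
  fixes m s r :: real assumes m: "0 < m" "m < 1" and s: "0 < s" and r: "0 < r" "r < 1"
  defines "f \<equiv> \<lambda>y. inverse ((y - 1) powr m * (1 + s - y))"
  shows "set_integrable lborel (einterval (ereal 1) (ereal (1 + s*r))) f"
    "(LBINT y=ereal 1..ereal (1 + s*r). f y) = s powr (-m) * (LBINT u=ereal 0..ereal r. u powr (-m) / (1-u))"
proof -
  define g where "g = (\<lambda>u::real. 1 + s * u)"
  define g' where "g' = (\<lambda>u::real. s)"
  have eq: "f (g u) * g' u = s powr (-m) * (u powr (-m) / (1-u))" if "u \<in> einterval (ereal 0) (ereal r)" for u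
  proof -
    from that have u: "0 < u" "u < r" by (auto simp: einterval_iff)
    have e1: "g u - 1 = s * u" "1 + s - g u = s * (1 - u)" by (auto simp: g_def algebra_simps)
    have pos: "s powr m > 0" "u powr m > 0" using s u by auto
    have "f (g u) * g' u = inverse (s powr m * u powr m * (s * (1 - u))) * s"
      unfolding f_def g'_def e1 using s u by (simp add: powr_mult)
    also have "\<dots> = s powr (-m) * (u powr (-m) / (1-u))"
      using pos s u r by (simp add: powr_minus field_simps)
    finally show ?thesis .
  qed
  have i0: "set_integrable lborel (einterval 0 r) (\<lambda>u. u powr ((1-m)-1) / (1-u))"
    by (rule Ppow_int) (use m r in auto)
  have i1: "set_integrable lborel (einterval (ereal 0) (ereal r)) (\<lambda>u. u powr (-m) / (1-u))"
    using i0 by (simp add: zero_ereal_def)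
  have int: "set_integrable lborel (einterval (ereal 0) (ereal r)) (\<lambda>u. f (g u) * g' u)"
    by (rule iffD2[OF set_integrable_cong[OF refl refl eq]]) (assumption, rule set_integrable_mult_right, rule i1)
  have val: "(LBINT u=ereal 0..ereal r. f (g u) * g' u) = s powr (-m) * (LBINT u=ereal 0..ereal r. u powr (-m) / (1-u))"
  proof -
    have "(LBINT u=ereal 0..ereal r. f (g u) * g' u) = (LBINT u=ereal 0..ereal r. s powr (-m) * (u powr (-m) / (1-u)))"
      by (rule interval_integral_cong) (use eq r in \<open>auto simp: min_def max_def\<close>)
    then show ?thesis by (simp only: interval_lebesgue_integral_mult_right)
  qed
  have A: "((ereal \<circ> g \<circ> real_of_ereal) \<longlongrightarrow> ereal 1) (at_right (ereal 0))"
    unfolding o_assoc[symmetric] ereal_tendsto_simps1 ereal_tendsto_simps2 g_def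
    by (auto intro!: tendsto_eq_intros)
  have B: "((ereal \<circ> g \<circ> real_of_ereal) \<longlongrightarrow> ereal (1 + s*r)) (at_left (ereal r))"
    unfolding o_assoc[symmetric] ereal_tendsto_simps1 ereal_tendsto_simps2 g_def
    by (auto intro!: tendsto_eq_intros)
  have h0: "ereal 0 < ereal r" using r by simp
  have d1: "DERIV g x :> g' x" if "ereal 0 < ereal x" "ereal x < ereal r" for x
    unfolding g_def g'_def by (auto intro!: derivative_eq_intros)
  have gx: "1 < g x \<and> g x < 1 + s" if "ereal 0 < ereal x" "ereal x < ereal r" for x
    using that s r by (auto simp: g_def)
  have d2: "isCont f (g x)" if "ereal 0 < ereal x" "ereal x < ereal r" for x
  proof -
    have "1 < g x" "g x < 1 + s" using gx that by auto
    then have "(g x - 1) powr m * (1 + s - g x) \<noteq> 0" using s by auto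
    then show ?thesis unfolding f_def using \<open>g x > 1\<close>
      by (intro continuous_intros) auto
  qed
  have d3: "isCont g' x" if "ereal 0 < ereal x" "ereal x < ereal r" for x
    unfolding g'_def by (auto intro!: continuous_intros)
  have d4: "0 \<le> f (g x)" if "ereal 0 < ereal x" "ereal x < ereal r" for x
  proof -
    have "1 < g x" "g x < 1 + s" using gx that by auto
    then show ?thesis unfolding f_def using s by simp
  qed
  have d5: "0 \<le> g' x" if "ereal 0 \<le> ereal x" "ereal x \<le> ereal r" for x unfolding g'_def using s by simp
  note rr = interval_integral_substitution_nonneg[where a="ereal 0" and b="ereal r" and f=f and g=g and g'=g' and A="ereal 1" and B="ereal (1+s*r)",
     OF h0 d1 d2 d3 d4 d5 A B int]
  show "set_integrable lborel (einterval (ereal 1) (ereal (1 + s*r))) f"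
    "(LBINT y=ereal 1..ereal (1 + s*r). f y) = s powr (-m) * (LBINT u=ereal 0..ereal r. u powr (-m) / (1-u))"
    using rr val by auto
qed

lemma S3:
  fixes m s e :: real assumes m: "0 < m" "m < 1" and s: "0 < s" and e: "0 < e"
  defines "f \<equiv> \<lambda>y. inverse ((y - 1) powr m * (y - (1 + s)))"
  defines "q \<equiv> s / (s + e)"
  shows "set_integrable lborel (einterval (ereal (1 + s + e)) \<infinity>) f"
    "(LBINT y=ereal (1 + s + e)..\<infinity>. f y) = s powr (-m) * (LBINT w=ereal 0..ereal q. w powr (m-1) / (1-w))"
proof -
  have q: "0 < q" "q < 1" using s e by (auto simp: q_def field_simps)
  define g where "g = (\<lambda>v::real. 1 - s / v)"
  define g' where "g' = (\<lambda>v::real. s / v^2)"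
  define F where "F = (\<lambda>v::real. s powr (-m) * ((-v) powr (m-1) / (1 - (-v))))"
  have eq: "f (g v) * g' v = F v" if "v \<in> einterval (ereal (-q)) (ereal 0)" for v
  proof -
    from that have v: "-q < v" "v < 0" by (auto simp: einterval_iff)
    define w where "w = -v"
    have w: "0 < w" "w < 1" using v q by (auto simp: w_def)
    have e1: "g v - 1 = s / w" "g v - (1 + s) = s * (1 - w) / w" "g' v = s / w^2"
      using w by (auto simp: g_def g'_def w_def field_simps)
    have pos: "s powr m > 0" "w powr m > 0" using s w by auto
    have "f (g v) * g' v = inverse (s powr m / w powr m * (s * (1 - w) / w)) * (s / w^2)"
      unfolding f_def e1 using s w by (simp add: powr_divide)
    also have "\<dots> = s powr (-m) * (w powr m / w / (1 - w))"
      using pos s w by (simp add: powr_minus field_simps power2_eq_square)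
    also have "\<dots> = F v"
      using w by (simp add: F_def w_def powr_diff)
    finally show ?thesis .
  qed
  have i0: "set_integrable lborel (einterval 0 q) (\<lambda>w. w powr (m-1) / (1-w))"
    by (rule Ppow_int) (use m q in auto)
  have i1: "interval_lebesgue_integrable lborel (ereal (-q)) (ereal 0) (\<lambda>v. (-v) powr (m-1) / (1 - (-v)))"
    using i0 q by (subst interval_integrable_mirror) (simp add: interval_lebesgue_integrable_def zero_ereal_def)
  have i2: "set_integrable lborel (einterval (ereal (-q)) (ereal 0)) F"
  proof -
    have "set_integrable lborel (einterval (ereal (-q)) (ereal 0)) (\<lambda>v. (-v) powr (m-1) / (1 - (-v)))"
      using i1 q by (simp add: interval_lebesgue_integrable_def)
    then have "set_integrable lborel (einterval (ereal (-q)) (ereal 0)) (\<lambda>v. s powr (-m) * ((-v) powr (m-1) / (1 - (-v))))"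
      by (rule set_integrable_mult_right)
    then show ?thesis by (simp only: F_def)
  qed
  have int: "set_integrable lborel (einterval (ereal (-q)) (ereal 0)) (\<lambda>v. f (g v) * g' v)"
    by (rule iffD2[OF set_integrable_cong[OF refl refl eq]]) (assumption, rule i2)
  have val: "(LBINT v=ereal (-q)..ereal 0. f (g v) * g' v) = s powr (-m) * (LBINT w=ereal 0..ereal q. w powr (m-1) / (1-w))"
  proof -
    have "(LBINT v=ereal (-q)..ereal 0. f (g v) * g' v) = (LBINT v=ereal (-q)..ereal 0. F v)"
      by (rule interval_integral_cong) (use eq q in \<open>auto simp: min_def max_def\<close>)
    also have "\<dots> = (LBINT w=ereal 0..ereal q. F (-w))"
      by (subst interval_integral_reflect) (simp add: zero_ereal_def)
    also have "\<dots> = s powr (-m) * (LBINT w=ereal 0..ereal q. w powr (m-1) / (1-w))"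
      unfolding F_def minus_minus by (rule interval_lebesgue_integral_mult_right)
    finally show ?thesis .
  qed
  have gq: "g (-q) = 1 + s + e" using s e by (simp add: g_def q_def field_simps)
  have A: "((ereal \<circ> g \<circ> real_of_ereal) \<longlongrightarrow> ereal (1 + s + e)) (at_right (ereal (-q)))"
    unfolding o_assoc[symmetric] ereal_tendsto_simps1 ereal_tendsto_simps2 gq[symmetric]
    unfolding g_def using q by (auto intro!: tendsto_eq_intros)
  have lim: "filterlim g at_top (at_left 0)"
    unfolding g_def using s by real_asymp
  have B: "((ereal \<circ> g \<circ> real_of_ereal) \<longlongrightarrow> \<infinity>) (at_left (ereal 0))"
    unfolding o_assoc[symmetric] ereal_tendsto_simps2 at_left_ereal filterlim_filtermap
    using lim ereal_tendsto_simps2(2)[of g] by (simp add: o_def)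
  have h0: "ereal (-q) < ereal 0" using q by simp
  have d1: "DERIV g x :> g' x" if "ereal (-q) < ereal x" "ereal x < ereal 0" for x
    using that unfolding g_def g'_def
    by (auto intro!: derivative_eq_intros simp: field_simps power2_eq_square)
  have gx: "1 + s < g x" if "ereal (-q) < ereal x" "ereal x < ereal 0" for x
  proof -
    have x: "-1 < x" "x < 0" using that q by auto
    have "s * (-x) < s * 1" using x s by (intro mult_strict_left_mono) auto
    then show ?thesis using x s by (simp add: g_def field_simps)
  qed
  have d2: "isCont f (g x)" if "ereal (-q) < ereal x" "ereal x < ereal 0" for x
  proof -
    have "1 + s < g x" using gx that by auto
    then have "(g x - 1) powr m * (g x - (1 + s)) \<noteq> 0" using s by auto
    then show ?thesis unfolding f_def using \<open>1 + s < g x\<close> s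
      by (intro continuous_intros) auto
  qed
  have d3: "isCont g' x" if "ereal (-q) < ereal x" "ereal x < ereal 0" for x
    using that unfolding g'_def by (auto intro!: continuous_intros)
  have d4: "0 \<le> f (g x)" if "ereal (-q) < ereal x" "ereal x < ereal 0" for x
  proof -
    have "1 + s < g x" using gx that by auto
    then show ?thesis unfolding f_def using s by simp
  qed
  have d5: "0 \<le> g' x" if "ereal (-q) \<le> ereal x" "ereal x \<le> ereal 0" for x unfolding g'_def using s by simp
  note rr = interval_integral_substitution_nonneg[where a="ereal (-q)" and b="ereal 0" and f=f and g=g and g'=g' and A="ereal (1+s+e)" and B="\<infinity>",
     OF h0 d1 d2 d3 d4 d5 A B int]
  show "set_integrable lborel (einterval (ereal (1 + s + e)) \<infinity>) f"
    "(LBINT y=ereal (1 + s + e)..\<infinity>. f y) = s powr (-m) * (LBINT w=ereal 0..ereal q. w powr (m-1) / (1-w))"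
    using rr val by auto
qed

lemma Digamma_diff_sums:
  fixes a b :: real assumes "a > 0" "b > 0"
  shows "(\<lambda>k. inverse (a + real k) - inverse (b + real k)) sums (Digamma b - Digamma a)"
proof -
  have sa: "(\<lambda>k. inverse (real (Suc k)) - inverse (a + real k)) sums (Digamma a + euler_mascheroni)"
    using summable_Digamma[of a] assms by (simp add: Digamma_def summable_sums)
  have sb: "(\<lambda>k. inverse (real (Suc k)) - inverse (b + real k)) sums (Digamma b + euler_mascheroni)"
    using summable_Digamma[of b] assms by (simp add: Digamma_def summable_sums)
  from sums_diff[OF sb sa] show ?thesis by simp
qed

lemma Jser:
  fixes a b :: real assumes a: "0 < a" and ab: "a \<le> b"
  shows "set_integrable lborel (einterval 0 1) (\<lambda>u. (u powr (a-1) - u powr (b-1)) / (1-u))"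
    "(LBINT u=0..1. (u powr (a-1) - u powr (b-1)) / (1-u)) = Digamma b - Digamma a"
proof -
  have b: "0 < b" using a ab by simp
  define I where "I = einterval (0::ereal) 1"
  have I: "u \<in> I \<longleftrightarrow> 0 < u \<and> u < 1" for u by (simp add: I_def einterval_iff)
  define D where "D = (\<lambda>u::real. u powr (a-1) - u powr (b-1))"
  define f where "f = (\<lambda>N u. (\<Sum>n<N. indicator I u * (u powr (real n + a - 1) - u powr (real n + b - 1))))"
  define U where "U = (\<lambda>u. indicator I u * (D u / (1 - u)))"
  have pw: "u powr (real n + c - 1) = u^n * u powr (c - 1)" if "u > 0" for u c n
  proof -
    have "u powr (real n + c - 1) = u powr (real n + (c - 1))" by (simp add: algebra_simps)
    also have "\<dots> = u powr real n * u powr (c - 1)" by (rule powr_add)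
    finally show ?thesis using that by (simp add: powr_realpow)
  qed
  have fI: "f N u = (\<Sum>n<N. u^n) * D u" if "u \<in> I" for N u
  proof -
    have "f N u = (\<Sum>n<N. u^n * D u)"
      unfolding f_def D_def using that I[of u] by (intro sum.cong) (simp_all add: pw right_diff_distrib)
    then show ?thesis by (simp add: sum_distrib_right)
  qed
  have fO: "f N u = 0" if "u \<notin> I" for N u
    using that unfolding f_def by simp
  have int1: "integrable lborel (\<lambda>u. indicator I u * (u powr (real n + c - 1)))"
     "integral\<^sup>L lborel (\<lambda>u. indicator I u * (u powr (real n + c - 1))) = 1 / (real n + c)" if "c > 0" for n c
  proof -
    have p: "real n + c > 0" using that by simp
    have "set_integrable lborel I (\<lambda>u. u powr ((real n + c) - 1))"
      using pow_int01(1)[OF p] by (simp add: I_def)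
    then show "integrable lborel (\<lambda>u. indicator I u * (u powr (real n + c - 1)))"
      by (simp add: set_integrable_def)
    have "(LBINT u=0..1. u powr ((real n + c) - 1)) = 1 / (real n + c)"
      by (rule pow_int01(2)[OF p])
    then show "integral\<^sup>L lborel (\<lambda>u. indicator I u * (u powr (real n + c - 1))) = 1 / (real n + c)"
      by (simp add: interval_lebesgue_integral_def I_def set_lebesgue_integral_def)
  qed
  have tint: "integrable lborel (\<lambda>u. indicator I u * (u powr (real n + a - 1) - u powr (real n + b - 1)))"
    and tval: "integral\<^sup>L lborel (\<lambda>u. indicator I u * (u powr (real n + a - 1) - u powr (real n + b - 1)))
               = inverse (a + real n) - inverse (b + real n)" for n
  proof -
    have e: "(\<lambda>u. indicator I u * (u powr (real n + a - 1) - u powr (real n + b - 1))) =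
       (\<lambda>u. indicator I u * (u powr (real n + a - 1)) - indicator I u * (u powr (real n + b - 1)))"
      by (simp add: right_diff_distrib)
    show "integrable lborel (\<lambda>u. indicator I u * (u powr (real n + a - 1) - u powr (real n + b - 1)))"
      unfolding e by (rule Bochner_Integration.integrable_diff[OF int1(1)[OF a] int1(1)[OF b]])
    show "integral\<^sup>L lborel (\<lambda>u. indicator I u * (u powr (real n + a - 1) - u powr (real n + b - 1)))
               = inverse (a + real n) - inverse (b + real n)"
      unfolding e by (subst Bochner_Integration.integral_diff[OF int1(1)[OF a] int1(1)[OF b]])
        (simp only: int1(2)[OF a] int1(2)[OF b], simp add: divide_inverse add.commute)
  qed
  have fint: "integrable lborel (f N)" for N
    unfolding f_def using tint by (rule Bochner_Integration.integrable_sum)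
  have fval: "integral\<^sup>L lborel (f N) = (\<Sum>n<N. inverse (a + real n) - inverse (b + real n))" for N
    unfolding f_def by (subst Bochner_Integration.integral_sum) (auto simp only: tint tval)
  have Dnn: "0 \<le> D u" if "u \<in> I" for u
    using that I[of u] ab unfolding D_def by (auto intro!: powr_mono')
  have mono: "AE u in lborel. mono (\<lambda>N. f N u)"
  proof (rule AE_I2)
    fix u show "mono (\<lambda>N. f N u)"
    proof (cases "u \<in> I")
      case True
      show ?thesis
      proof (rule monoI)
        fix N M :: nat assume "N \<le> M"
        then have "(\<Sum>n<N. u^n) \<le> (\<Sum>n<M. u^n)"
          using True I[of u] by (intro sum_mono2) auto
        then show "f N u \<le> f M u" using True Dnn[OF True] by (simp add: fI mult_right_mono)
      qed
    qed (simp add: fO monoI)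
  qed
  have pos: "AE u in lborel. 0 \<le> f N u" for N
  proof (rule AE_I2)
    fix u show "0 \<le> f N u"
      by (cases "u \<in> I") (auto simp: fI fO Dnn I intro!: sum_nonneg mult_nonneg_nonneg)
  qed
  have lim: "AE u in lborel. (\<lambda>N. f N u) \<longlonglongrightarrow> U u"
  proof (rule AE_I2)
    fix u show "(\<lambda>N. f N u) \<longlonglongrightarrow> U u"
    proof (cases "u \<in> I")
      case True
      then have "norm u < 1" using I[of u] by auto
      from geometric_sums[OF this] have "(\<lambda>N. \<Sum>n<N. u^n) \<longlonglongrightarrow> 1 / (1 - u)"
        by (simp add: sums_def)
      then have "(\<lambda>N. (\<Sum>n<N. u^n) * D u) \<longlonglongrightarrow> 1 / (1 - u) * D u"
        by (intro tendsto_mult tendsto_const)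
      then show ?thesis using True by (simp add: fI U_def)
    qed (simp add: fO U_def)
  qed
  have ilim: "(\<lambda>N. integral\<^sup>L lborel (f N)) \<longlonglongrightarrow> Digamma b - Digamma a"
    using Digamma_diff_sums[OF a b] unfolding fval sums_def .
  have meas: "U \<in> borel_measurable lborel"
    unfolding U_def D_def I_def by measurable
  note mc = integral_monotone_convergence_nonneg[OF fint mono pos lim ilim meas]
  show "set_integrable lborel (einterval 0 1) (\<lambda>u. (u powr (a-1) - u powr (b-1)) / (1-u))"
    using mc(1) by (simp add: set_integrable_def U_def D_def I_def)
  show "(LBINT u=0..1. (u powr (a-1) - u powr (b-1)) / (1-u)) = Digamma b - Digamma a"
    using mc(2) by (simp add: interval_lebesgue_integral_def set_lebesgue_integral_def U_def D_def I_def)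
qed

lemma Digamma_refl_real:
  fixes m :: real assumes m: "0 < m" "m < 1"
  shows "Digamma m - Digamma (1 - m) = - pi * cos (pi * m) / sin (pi * m)"
proof -
  define L where "L = (\<lambda>x::real. ln_Gamma x + ln_Gamma (1 - x))"
  define R where "R = (\<lambda>x::real. ln pi - ln (sin (pi * x)))"
  have sinpos: "sin (pi * x) > 0" if "0 < x" "x < 1" for x
    using that by (intro sin_gt_zero) auto
  have LR: "L x = R x" if "0 < x" "x < 1" for x
  proof -
    have "L x = ln (Gamma x * Gamma (1 - x))"
    proof -
      have "Gamma x > 0" "Gamma (1-x) > 0" using that by auto
      then have "ln (Gamma x * Gamma (1 - x)) = ln (Gamma x) + ln (Gamma (1 - x))" by (rule ln_mult_pos)
      moreover have "L x = ln (Gamma x) + ln (Gamma (1 - x))" using that by (simp add: L_def ln_Gamma_real_pos)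
      ultimately show ?thesis by simp
    qed
    also have "\<dots> = ln (pi / sin (pi * x))" using Gamma_refl_real[OF that] by simp
    also have "\<dots> = R x" using sinpos[OF that] by (simp add: R_def ln_div)
    finally show ?thesis .
  qed
  have dL: "(L has_real_derivative (Digamma m - Digamma (1 - m))) (at m)"
    unfolding L_def using m by (auto intro!: derivative_eq_intros)
  have dR: "(R has_real_derivative (- (cos (pi * m) * pi) / sin (pi * m))) (at m)"
    unfolding R_def using m sinpos[OF m] by (auto intro!: derivative_eq_intros simp: field_simps)
  have ev: "eventually (\<lambda>x. L x = R x) (nhds m)"
    using eventually_nhds_in_open[of "{0<..<1}" m] m by (auto elim!: eventually_mono intro: LR)
  have dL': "(R has_real_derivative (Digamma m - Digamma (1 - m))) (at m)"
    using dL by (subst (asm) DERIV_cong_ev[OF refl ev refl])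
  from DERIV_unique[OF dL' dR] show ?thesis by (simp add: field_simps)
qed

lemma J_lemma:
  fixes m :: real assumes m: "0 < m" "m < 1"
  shows "set_integrable lborel (einterval 0 1) (\<lambda>u. (u powr (-m) - u powr (m-1)) / (1-u))"
    "(LBINT u=0..1. (u powr (-m) - u powr (m-1)) / (1-u)) = - pi * cos (pi * m) / sin (pi * m)"
proof -
  have "set_integrable lborel (einterval 0 1) (\<lambda>u. (u powr (-m) - u powr (m-1)) / (1-u)) \<and>
        (LBINT u=0..1. (u powr (-m) - u powr (m-1)) / (1-u)) = Digamma m - Digamma (1 - m)"
  proof (cases "1 - m \<le> m")
    case True
    from Jser[OF _ True] m show ?thesis by simp
  next
    case False
    then have le: "m \<le> 1 - m" by simp
    note J = Jser[OF m(1) le]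
    have e: "(\<lambda>u::real. (u powr (-m) - u powr (m-1)) / (1-u)) = (\<lambda>u. - ((u powr (m-1) - u powr ((1-m)-1)) / (1-u)))"
      by (intro ext) (simp add: diff_divide_distrib)
    show ?thesis
    proof
      show "set_integrable lborel (einterval 0 1) (\<lambda>u. (u powr (-m) - u powr (m-1)) / (1-u))"
        using set_integrable_mult_right[of "-1", OF J(1)] by (simp add: diff_divide_distrib)
      show "(LBINT u=0..1. (u powr (-m) - u powr (m-1)) / (1-u)) = Digamma m - Digamma (1 - m)"
        unfolding e interval_lebesgue_integral_uminus J(2) by simp
    qed
  qed
  then show "set_integrable lborel (einterval 0 1) (\<lambda>u. (u powr (-m) - u powr (m-1)) / (1-u))"
    "(LBINT u=0..1. (u powr (-m) - u powr (m-1)) / (1-u)) = - pi * cos (pi * m) / sin (pi * m)"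
    using Digamma_refl_real[OF m] by auto
qed

lemma E_bound:
  fixes m d :: real assumes m: "0 < m" "m < 1" and d: "0 < d" "d \<le> 1/2"
  shows "\<bar>LBINT w=ereal (1-d)..ereal (1/(1+d)). w powr (m-1) / (1-w)\<bar> \<le> 4 * d"
proof -
  define r where "r = 1 - d"
  define q where "q = 1/(1+d)"
  have p1: "0 < 1 + d" using d by simp
  have rq1: "1/2 \<le> r" using d by (simp add: r_def)
  have "(1-d)*(1+d) < 1" using d by (simp add: algebra_simps)
  then have rq2: "r < q" unfolding r_def q_def using p1 by (simp add: pos_less_divide_eq)
  have rq3: "q < 1" unfolding q_def using d by simp
  note rq = rq1 rq2 rq3
  have "q - r = (1 - (1-d)*(1+d))/(1+d)" unfolding q_def r_def using p1 by (simp add: diff_divide_distrib)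
  then have qr: "q - r = d*d/(1+d)" by (simp add: algebra_simps)
  define F where "F = (\<lambda>w::real. w powr (m-1) / (1-w))"
  have cont: "continuous_on {r..q} F" unfolding F_def using rq
    by (intro continuous_intros) auto
  have iF: "set_integrable lborel (einterval r q) F"
    by (rule set_integrable_subset[OF borel_integrable_atLeastAtMost'[OF cont]]) (auto simp: einterval_iff)
  have bnd: "0 \<le> F w \<and> F w \<le> 4 / d" if "w \<in> einterval r q" for w
  proof -
    have w: "r < w" "w < q" using that by (auto simp: einterval_iff)
    have "w powr (m-1) \<le> (1/2) powr (m-1)" using w rq m by (intro powr_mono2') auto
    also have "(1/2::real) powr (m-1) = 2 powr (1-m)"
    proof -
      have a: "(1/2::real) powr (m-1) = 1 / 2 powr (m-1)" by (simp add: powr_divide)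
      have b: "(2::real) powr (1-m) = 1 / 2 powr (m-1)" by (simp add: powr_diff)
      show ?thesis by (simp only: a b)
    qed
    also have "\<dots> \<le> 2 powr 1" using m by (intro powr_mono) auto
    finally have p: "w powr (m-1) \<le> 2" by simp
    have e1: "1 - q = d / (1+d)" unfolding q_def using p1 by (simp add: field_simps)
    have e2: "d/(1+d) \<ge> d/2" using d by (intro divide_left_mono) auto
    have "1 - w \<ge> d/2" using w e1 e2 by linarith
    then have "1 / (1 - w) \<le> 1 / (d/2)" using d by (intro divide_left_mono) auto
    then have "1 / (1 - w) \<le> 2 / d" by simp
    have "F w = w powr (m-1) * (1 / (1 - w))" by (simp add: F_def)
    also have "\<dots> \<le> 2 * (2 / d)"
      using p \<open>1 / (1 - w) \<le> 2 / d\<close> w rq by (intro mult_mono) auto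
    finally have "F w \<le> 4 / d" by simp
    moreover have "0 \<le> F w" unfolding F_def using w rq by simp
    ultimately show ?thesis by blast
  qed
  have rqe: "ereal r \<le> ereal q" using rq by simp
  have ic: "set_integrable lborel (einterval r q) (\<lambda>x. 4/d)"
    using interval_integral_const(1)[of r q "4/d"] rq by (simp add: interval_lebesgue_integrable_def)
  have "(LBINT w=ereal r..ereal q. F w) \<le> (LBINT w=ereal r..ereal q. 4/d)"
    unfolding interval_lebesgue_integral_le_eq[OF rqe]
    by (intro set_integral_mono iF ic) (use bnd in auto)
  also have "\<dots> = 4/d * (q - r)" by simp
  also have "\<dots> = 4 * d / (1 + d)" using d by (simp add: qr)
  also have "\<dots> \<le> 4 * d" using d by (simp add: divide_le_eq)
  finally have up: "(LBINT w=ereal r..ereal q. F w) \<le> 4 * d" .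
  have "0 \<le> (LBINT w=ereal r..ereal q. F w)"
  proof -
    have "(LINT w:einterval r q|lborel. (0::real)) \<le> (LINT w:einterval r q|lborel. F w)"
      by (intro set_integral_mono iF) (use bnd in \<open>auto simp: set_integrable_def\<close>)
    then show ?thesis by (simp add: interval_lebesgue_integral_le_eq[OF rqe] set_lebesgue_integral_def)
  qed
  with up show ?thesis by (simp add: r_def q_def F_def)
qed

lemma K_limit:
  fixes m :: real assumes m: "0 < m" "m < 1"
  shows "((\<lambda>d. (LBINT u=ereal 0..ereal (1-d). u powr (-m) / (1-u))
              - (LBINT w=ereal 0..ereal (1/(1+d)). w powr (m-1) / (1-w)))
          \<longlongrightarrow> - pi * cos (pi * m) / sin (pi * m)) (at_right 0)"
proof -
  define h where "h = (\<lambda>u::real. (u powr (-m) - u powr (m-1)) / (1-u))"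
  define Jv where "Jv = - pi * cos (pi * m) / sin (pi * m)"
  define H where "H = (\<lambda>r::real. LBINT u=ereal 0..ereal r. h u)"
  define E where "E = (\<lambda>d::real. LBINT w=ereal (1-d)..ereal (1/(1+d)). w powr (m-1) / (1-w))"
  have h0: "h 0 = 0" by (simp add: h_def)
  have ei: "einterval 0 1 = {0<..<1::real}" by (auto simp: einterval_iff)
  have J1: "set_integrable lborel {0<..<1} h"
    using J_lemma(1)[OF m] by (simp add: h_def ei)
  have J2: "(LINT u:{0<..<1}|lborel. h u) = Jv"
    using J_lemma(2)[OF m] by (simp add: h_def Jv_def interval_lebesgue_integral_le_eq ei)
  have ind: "indicator {0..<1} u * h u = indicator {0<..<1} u * h u" for u :: real
    using h0 by (cases "u = 0") (auto split: split_indicator)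
  have J1': "set_integrable lborel {0..<1} h"
    using J1 unfolding set_integrable_def by (simp add: ind)
  have J2': "(LINT u:{0..<1}|lborel. h u) = Jv"
    using J2 unfolding set_lebesgue_integral_def by (simp add: ind)
  have lim1: "((\<lambda>r. LINT u:{0..r}|lborel. h u) \<longlongrightarrow> Jv) (at_left 1)"
    using tendsto_set_lebesgue_integral_at_left[of 0 1 lborel h] J1' J2' by simp
  have Heq: "eventually (\<lambda>r. (LINT u:{0..r}|lborel. h u) = H r) (at_left 1)"
    unfolding H_def by (rule eventually_at_leftI[of 0]) (auto simp: interval_integral_Icc)
  have limH: "(H \<longlongrightarrow> Jv) (at_left 1)"
    using tendsto_cong[OF Heq] lim1 by simp
  have fl: "filterlim (\<lambda>d::real. 1 - d) (at_left 1) (at_right 0)"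
    unfolding filterlim_at
    by (auto intro!: tendsto_eq_intros eventually_at_rightI[of 0 1])
  have limH2: "((\<lambda>d. H (1 - d)) \<longlongrightarrow> Jv) (at_right 0)"
    by (rule filterlim_compose[OF limH fl])
  have limE: "(E \<longlongrightarrow> 0) (at_right 0)"
  proof (rule Lim_null_comparison)
    show "eventually (\<lambda>d. norm (E d) \<le> 4 * d) (at_right 0)"
      by (rule eventually_at_rightI[of 0 "1/2"]) (auto simp: E_def intro!: E_bound[OF m])
    show "((\<lambda>d::real. 4 * d) \<longlongrightarrow> 0) (at_right 0)"
      by (auto intro!: tendsto_eq_intros)
  qed
  have eq: "(LBINT u=ereal 0..ereal (1-d). u powr (-m) / (1-u))
              - (LBINT w=ereal 0..ereal (1/(1+d)). w powr (m-1) / (1-w)) = H (1 - d) - E d"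
    if d: "0 < d" "d < 1/2" for d
  proof -
    define r where "r = 1 - d"
    define q where "q = 1/(1+d)"
    have p1: "0 < 1 + d" using d by simp
    have "(1-d)*(1+d) < 1" using d by (simp add: algebra_simps)
    then have rq: "r < q" unfolding r_def q_def using p1 by (simp add: pos_less_divide_eq)
    have r: "0 < r" "r < 1" using d by (auto simp: r_def)
    have q: "0 < q" "q < 1" using d by (auto simp: q_def)
    have iP: "set_integrable lborel (einterval (ereal 0) (ereal r)) (\<lambda>u. u powr (-m) / (1-u))"
      using Ppow_int[of "1-m" r] m r by (simp add: zero_ereal_def)
    have iQr: "set_integrable lborel (einterval (ereal 0) (ereal r)) (\<lambda>u. u powr (m-1) / (1-u))"
      using Ppow_int[of m r] m r by (simp add: zero_ereal_def)
    have iQq: "set_integrable lborel (einterval (ereal 0) (ereal q)) (\<lambda>u. u powr (m-1) / (1-u))"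
      using Ppow_int[of m q] m q by (simp add: zero_ereal_def)
    have le0r: "ereal 0 \<le> ereal r" using r by simp
    have le0q: "ereal 0 \<le> ereal q" using q by simp
    have dPQ: "(LBINT u=ereal 0..ereal r. u powr (-m) / (1-u)) - (LBINT u=ereal 0..ereal r. u powr (m-1) / (1-u))
         = (LBINT u=ereal 0..ereal r. (u powr (-m) / (1-u) - u powr (m-1) / (1-u)))"
      using iP iQr le0r
      by (subst interval_lebesgue_integral_diff(2)) (auto simp: interval_lebesgue_integrable_def)
    also have "\<dots> = H r" unfolding H_def h_def by (simp add: diff_divide_distrib)
    finally have dPQ': "(LBINT u=ereal 0..ereal r. u powr (-m) / (1-u)) - (LBINT u=ereal 0..ereal r. u powr (m-1) / (1-u)) = H r" .
    have sumQ: "(LBINT u=ereal 0..ereal r. u powr (m-1) / (1-u)) + (LBINT u=ereal r..ereal q. u powr (m-1) / (1-u))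
          = (LBINT u=ereal 0..ereal q. u powr (m-1) / (1-u))"
      by (rule interval_integral_sum) (use iQq rq r in \<open>auto simp: interval_lebesgue_integrable_def min_def max_def\<close>)
    have "E d = (LBINT u=ereal r..ereal q. u powr (m-1) / (1-u))" by (simp add: E_def r_def q_def)
    then show ?thesis using dPQ' sumQ by (simp add: r_def q_def)
  qed
  have ev: "eventually (\<lambda>d. H (1 - d) - E d = (LBINT u=ereal 0..ereal (1-d). u powr (-m) / (1-u))
              - (LBINT w=ereal 0..ereal (1/(1+d)). w powr (m-1) / (1-w))) (at_right 0)"
    by (rule eventually_at_rightI[of 0 "1/2"]) (use eq in auto)
  have "((\<lambda>d. H (1 - d) - E d) \<longlongrightarrow> Jv - 0) (at_right 0)"
    by (intro tendsto_diff limH2 limE)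
  then show ?thesis using tendsto_cong[OF ev] by (simp add: Jv_def)
qed

lemma HT_left:
  fixes m x :: real assumes m: "0 < m" "m < 1" and x: "x < 1"
  defines "\<Omega> \<equiv> (\<lambda>X::real. - sin (pi * m) * indicator {Y. Y > 1} X / \<bar>1 - X\<bar> powr m)"
  shows "has_Hilbert_transform \<Omega> x (1 / \<bar>1 - x\<bar> powr m)"
proof -
  define s where "s = 1 - x"
  have s: "0 < s" using x by (simp add: s_def)
  define S where "S = sin (pi * m)"
  have S: "S > 0" unfolding S_def using m by (intro sin_gt_zero) auto
  define f where "f = (\<lambda>y. inverse ((y - 1) powr m * (y - (1 - s))))"
  note S1' = S1[OF m s, folded f_def]
  have ei: "einterval 1 \<infinity> = {1::real<..}" by (auto simp: einterval_iff)
  define G where "G = (\<lambda>y. S * (indicator {1<..} y * f y))"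
  have Gint: "integrable lborel G"
    using S1'(1) unfolding G_def ei set_integrable_def by simp
  have Gval: "integral\<^sup>L lborel G = S * (s powr (-m) * (pi / S))"
    using S1'(2) unfolding G_def S_def
    by (simp add: interval_lebesgue_integral_le_eq ei set_lebesgue_integral_def)
  have OG: "\<Omega> y / (x - y) = G y" for y
  proof (cases "y > 1")
    case True
    then have "x - y < 0" "(y - 1) powr m > 0" using x by auto
    then show ?thesis using True unfolding \<Omega>_def G_def f_def S_def s_def
      by (simp add: field_simps abs_if)
  qed (simp add: \<Omega>_def G_def)
  have meas: "{y. e < \<bar>x - y\<bar>} \<in> sets lborel" for e :: real
    by measurable
  have int: "set_integrable lborel {y. e < \<bar>x - y\<bar>} (\<lambda>y. \<Omega> y / (x - y))" for e
    unfolding set_integrable_def OG using integrable_mult_indicator[OF meas Gint] by simp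
  have val: "(LINT y:{y. e < \<bar>x - y\<bar>}|lborel. \<Omega> y / (x - y)) = pi * s powr (-m)" if "0 < e" "e < s" for e
  proof -
    have e1: "(\<lambda>y. indicator {y. e < \<bar>x - y\<bar>} y *\<^sub>R G y) = G"
      using that unfolding G_def s_def by (auto split: split_indicator)
    show ?thesis unfolding set_lebesgue_integral_def OG e1 using Gval S by simp
  qed
  have lim: "((\<lambda>e. (1 / pi) * (LINT y:{y. e < \<bar>x - y\<bar>}|lborel. \<Omega> y / (x - y))) \<longlongrightarrow> 1 / \<bar>1 - x\<bar> powr m) (at_right 0)"
  proof -
    have ev: "eventually (\<lambda>e. 1 / \<bar>1 - x\<bar> powr m = (1 / pi) * (LINT y:{y. e < \<bar>x - y\<bar>}|lborel. \<Omega> y / (x - y))) (at_right 0)"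
      by (rule eventually_at_rightI[of 0 s]) (use val s in \<open>auto simp: s_def powr_minus divide_inverse\<close>)
    show ?thesis by (rule iffD1[OF tendsto_cong[OF ev] tendsto_const])
  qed
  show ?thesis unfolding has_Hilbert_transform_def using int lim by auto
qed

lemma HT_right:
  fixes m x :: real assumes m: "0 < m" "m < 1" and x: "x > 1"
  defines "\<Omega> \<equiv> (\<lambda>X::real. - sin (pi * m) * indicator {Y. Y > 1} X / \<bar>1 - X\<bar> powr m)"
  shows "has_Hilbert_transform \<Omega> x (cos (pi * m) / \<bar>1 - x\<bar> powr m)"
proof -
  define s where "s = x - 1"
  have s: "0 < s" using x by (simp add: s_def)
  define S where "S = sin (pi * m)"
  have S: "S > 0" unfolding S_def using m by (intro sin_gt_zero) auto
  define f1 where "f1 = (\<lambda>y. inverse ((y - 1) powr m * (1 + s - y)))"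
  define f2 where "f2 = (\<lambda>y. inverse ((y - 1) powr m * (y - (1 + s))))"
  define A where "A = (\<lambda>e. einterval (ereal 1) (ereal (x - e)))"
  define B where "B = (\<lambda>e. einterval (ereal (x + e)) \<infinity>)"
  have iB: "set_integrable lborel (B e) f2" if "0 < e" for e
    using S3(1)[OF m s that] unfolding B_def f2_def s_def by simp
  have iA: "set_integrable lborel (A e) f1" if "0 < e" for e
  proof (cases "e < s")
    case True
    have r: "0 < 1 - e/s" "1 - e/s < 1" using True that s by (auto simp: field_simps)
    have "1 + s * (1 - e/s) = x - e" using s by (simp add: s_def field_simps)
    then show ?thesis using S2(1)[OF m s r] unfolding A_def f1_def by simp
  next
    case False
    then have "A e = {}" unfolding A_def s_def by (auto simp: einterval_iff)
    then show ?thesis by (simp add: set_integrable_def)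
  qed
  have pw: "indicator {y. e < \<bar>x - y\<bar>} y *\<^sub>R (\<Omega> y / (x - y))
      = S * (indicator (B e) y * f2 y) - S * (indicator (A e) y * f1 y)" if e: "0 < e" for e y
  proof -
    consider "y \<le> 1" | "1 < y" "y < x - e" | "x - e \<le> y" "y \<le> x + e" | "x + e < y" by linarith
    then show ?thesis
    proof cases
      case 1
      then show ?thesis using e x by (auto simp: \<Omega>_def A_def B_def einterval_iff split: split_indicator)
    next
      case 2
      then have p: "(y - 1) powr m > 0" "x - y > 0" using e by auto
      have "\<bar>x - y\<bar> > e" using 2 by auto
      then show ?thesis using 2 p e x unfolding \<Omega>_def A_def B_def f1_def S_def s_def
        by (auto simp: einterval_iff field_simps split: split_indicator)
    next
      case 3
      then show ?thesis using e x by (auto simp: \<Omega>_def A_def B_def einterval_iff split: split_indicator)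
    next
      case 4
      then have p: "(y - 1) powr m > 0" "y - x > 0" using e x by auto
      have "\<bar>x - y\<bar> > e" using 4 by auto
      then show ?thesis using 4 p e x unfolding \<Omega>_def A_def B_def f2_def S_def s_def
        by (auto simp: einterval_iff field_simps split: split_indicator)
    qed
  qed
  have int: "set_integrable lborel {y. e < \<bar>x - y\<bar>} (\<lambda>y. \<Omega> y / (x - y))" if "0 < e" for e
  proof -
    have "integrable lborel (\<lambda>y. S * (indicator (B e) y * f2 y) - S * (indicator (A e) y * f1 y))"
      using iA[OF that] iB[OF that] unfolding set_integrable_def by simp
    then show ?thesis unfolding set_integrable_def pw[OF that] .
  qed
  define K where "K = (\<lambda>d. (LBINT u=ereal 0..ereal (1-d). u powr (-m) / (1-u))
              - (LBINT w=ereal 0..ereal (1/(1+d)). w powr (m-1) / (1-w)))"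
  have val: "(1 / pi) * (LINT y:{y. e < \<bar>x - y\<bar>}|lborel. \<Omega> y / (x - y)) = - (S / pi) * s powr (-m) * K (e / s)"
    if e: "0 < e" "e < s" for e
  proof -
    have r: "0 < 1 - e/s" "1 - e/s < 1" using e s by (auto simp: field_simps)
    have xr: "1 + s * (1 - e/s) = x - e" using s by (simp add: s_def field_simps)
    have xq: "1 + s + e = x + e" by (simp add: s_def)
    have qq: "s / (s + e) = 1 / (1 + e / s)" using s e by (simp add: field_simps)
    have vA: "(LINT y:A e|lborel. f1 y) = s powr (-m) * (LBINT u=ereal 0..ereal (1 - e/s). u powr (-m) / (1-u))"
    proof -
      have le: "ereal 1 \<le> ereal (x - e)" using e by (simp add: s_def)
      show ?thesis using S2(2)[OF m s r] unfolding A_def f1_def xr interval_lebesgue_integral_le_eq[OF le] .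
    qed
    have vB: "(LINT y:B e|lborel. f2 y) = s powr (-m) * (LBINT w=ereal 0..ereal (1/(1 + e/s)). w powr (m-1) / (1-w))"
      using S3(2)[OF m s e(1)] unfolding B_def f2_def xq qq
      by (simp add: interval_lebesgue_integral_le_eq)
    have "(LINT y:{y. e < \<bar>x - y\<bar>}|lborel. \<Omega> y / (x - y))
       = integral\<^sup>L lborel (\<lambda>y. S * (indicator (B e) y * f2 y) - S * (indicator (A e) y * f1 y))"
      unfolding set_lebesgue_integral_def pw[OF e(1)] ..
    also have "\<dots> = S * (LINT y:B e|lborel. f2 y) - S * (LINT y:A e|lborel. f1 y)"
      using iA[OF e(1)] iB[OF e(1)] unfolding set_integrable_def set_lebesgue_integral_def
      by (subst Bochner_Integration.integral_diff) auto
    also have "\<dots> = - S * s powr (-m) * K (e / s)"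
      unfolding vA vB K_def by (simp add: algebra_simps)
    finally show ?thesis by simp
  qed
  have fl: "filterlim (\<lambda>e::real. e / s) (at_right 0) (at_right 0)"
    unfolding filterlim_at using s
    by (auto intro!: tendsto_eq_intros eventually_at_rightI[of 0 1] simp: field_simps)
  have limK: "((\<lambda>e. K (e / s)) \<longlongrightarrow> - pi * cos (pi * m) / sin (pi * m)) (at_right 0)"
    unfolding K_def by (rule filterlim_compose[OF K_limit[OF m] fl])
  have lim0: "((\<lambda>e. - (S / pi) * s powr (-m) * K (e / s)) \<longlongrightarrow>
       - (S / pi) * s powr (-m) * (- pi * cos (pi * m) / sin (pi * m))) (at_right 0)"
    by (intro tendsto_mult limK tendsto_const)
  have c: "- (S / pi) * s powr (-m) * (- pi * cos (pi * m) / sin (pi * m)) = cos (pi * m) / \<bar>1 - x\<bar> powr m"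
    using S x unfolding S_def s_def by (simp add: powr_minus field_simps abs_if)
  have ev: "eventually (\<lambda>e. - (S / pi) * s powr (-m) * K (e / s) = (1 / pi) * (LINT y:{y. e < \<bar>x - y\<bar>}|lborel. \<Omega> y / (x - y))) (at_right 0)"
    by (rule eventually_at_rightI[of 0 s]) (use val s in auto)
  have lim: "((\<lambda>e. (1 / pi) * (LINT y:{y. e < \<bar>x - y\<bar>}|lborel. \<Omega> y / (x - y))) \<longlongrightarrow> cos (pi * m) / \<bar>1 - x\<bar> powr m) (at_right 0)"
    using iffD1[OF tendsto_cong[OF ev] lim0] unfolding c .
  show ?thesis unfolding has_Hilbert_transform_def using int lim by auto
qed

lemma Hilbert_transform_eq:
  assumes "has_Hilbert_transform f x v"
  shows "Hilbert_transform f x = v"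
proof -
  have "(THE v. has_Hilbert_transform f x v) = v"
  proof (rule the_equality)
    show "has_Hilbert_transform f x v" by fact
    fix w assume "has_Hilbert_transform f x w"
    then show "w = v" using assms unfolding has_Hilbert_transform_def
      by (auto intro: tendsto_unique[OF trivial_limit_at_right_real])
  qed
  then show ?thesis by (simp add: Hilbert_transform_def)
qed

lemma int_left:
  fixes m :: real assumes m: "0 < m" "m < 1" and Z: "Z < 1"
  shows "(LBINT Y=ereal 0..ereal Z. 1 / (1 - Y) powr m) = (1 - (1 - Z) powr (1 - m)) / (1 - m)"
proof -
  define F where "F = (\<lambda>Y::real. -((1 - Y) powr (1 - m)) / (1 - m))"
  have sub: "Y < 1" if "min 0 Z \<le> Y" "Y \<le> max 0 Z" for Y using that Z by auto
  have "(LBINT Y=ereal 0..ereal Z. 1 / (1 - Y) powr m) = F Z - F 0"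
  proof (rule interval_integral_FTC_finite)
    show "continuous_on {min 0 Z..max 0 Z} (\<lambda>Y. 1 / (1 - Y) powr m)"
      using sub by (intro continuous_at_imp_continuous_on ballI continuous_intros) auto
    show "(F has_vector_derivative 1 / (1 - Y) powr m) (at Y within {min 0 Z..max 0 Z})"
      if "min 0 Z \<le> Y" "Y \<le> max 0 Z" for Y
    proof -
      have Y: "Y < 1" using sub that by auto
      have d0: "((\<lambda>Y. 1 - Y) has_real_derivative -1) (at Y)" by (auto intro!: derivative_eq_intros)
      have d1: "((\<lambda>Y. (1 - Y) powr (1 - m)) has_real_derivative (1 - m) * (1 - Y) powr ((1 - m) - of_nat 1) * -1) (at Y)"
        using DERIV_fun_powr[OF d0, of "1 - m"] Y by simp
      have d2: "(F has_real_derivative -((1 - m) * (1 - Y) powr ((1 - m) - of_nat 1) * -1) / (1 - m)) (at Y)"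
        unfolding F_def by (intro DERIV_cdivide DERIV_minus d1)
      have "-((1 - m) * (1 - Y) powr ((1 - m) - of_nat 1) * -1) / (1 - m) = 1 / (1 - Y) powr m"
        using m Y by (simp add: powr_minus_divide)
      with d2 have "(F has_real_derivative 1 / (1 - Y) powr m) (at Y)" by simp
      then show ?thesis
        by (simp add: has_real_derivative_iff_has_vector_derivative has_vector_derivative_at_within)
    qed
  qed
  also have "\<dots> = (1 - (1 - Z) powr (1 - m)) / (1 - m)" unfolding F_def by (simp add: diff_divide_distrib)
  finally show ?thesis .
qed

lemma deriv_L:
  fixes m Y :: real assumes m: "m < 1" and Y: "Y < 1"
  shows "((\<lambda>Y. -((1 - Y) powr (1 - m)) / (1 - m)) has_real_derivative 1 / (1 - Y) powr m) (at Y)"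
proof -
  have d0: "((\<lambda>Y. 1 - Y) has_real_derivative -1) (at Y)" by (auto intro!: derivative_eq_intros)
  have d1: "((\<lambda>Y. (1 - Y) powr (1 - m)) has_real_derivative (1 - m) * (1 - Y) powr ((1 - m) - of_nat 1) * -1) (at Y)"
    using DERIV_fun_powr[OF d0, of "1 - m"] Y by simp
  have d2: "((\<lambda>Y. -((1 - Y) powr (1 - m)) / (1 - m)) has_real_derivative -((1 - m) * (1 - Y) powr ((1 - m) - of_nat 1) * -1) / (1 - m)) (at Y)"
    by (intro DERIV_cdivide DERIV_minus d1)
  have "-((1 - m) * (1 - Y) powr ((1 - m) - of_nat 1) * -1) / (1 - m) = 1 / (1 - Y) powr m"
    using m Y by (simp add: powr_minus_divide)
  with d2 show ?thesis by simp
qed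

lemma deriv_R:
  fixes m Y :: real assumes m: "m < 1" and Y: "Y > 1"
  shows "((\<lambda>Y. (Y - 1) powr (1 - m) / (1 - m)) has_real_derivative 1 / (Y - 1) powr m) (at Y)"
proof -
  have d0: "((\<lambda>Y. Y - 1) has_real_derivative 1) (at Y)" by (auto intro!: derivative_eq_intros)
  have d1: "((\<lambda>Y. (Y - 1) powr (1 - m)) has_real_derivative (1 - m) * (Y - 1) powr ((1 - m) - of_nat 1) * 1) (at Y)"
    using DERIV_fun_powr[OF d0, of "1 - m"] Y by simp
  have d2: "((\<lambda>Y. (Y - 1) powr (1 - m) / (1 - m)) has_real_derivative ((1 - m) * (Y - 1) powr ((1 - m) - of_nat 1) * 1) / (1 - m)) (at Y)"
    by (intro DERIV_cdivide d1)
  have "((1 - m) * (Y - 1) powr ((1 - m) - of_nat 1) * 1) / (1 - m) = 1 / (Y - 1) powr m"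
    using m Y by (simp add: powr_minus_divide)
  with d2 show ?thesis by simp
qed

lemma p1_int:
  fixes m :: real assumes m: "0 < m" "m < 1"
  shows "set_integrable lborel (einterval (ereal 0) (ereal 1)) (\<lambda>Y. 1 / (1 - Y) powr m)"
    "(LBINT Y=ereal 0..ereal 1. 1 / (1 - Y) powr m) = 1 / (1 - m)"
proof -
  define F where "F = (\<lambda>Y::real. -((1 - Y) powr (1 - m)) / (1 - m))"
  have d: "(F has_real_derivative 1 / (1 - Y) powr m) (at Y)" if "ereal 0 < ereal Y" "ereal Y < ereal 1" for Y
    unfolding F_def using that m by (intro deriv_L) auto
  have c: "isCont (\<lambda>Y. 1 / (1 - Y) powr m) Y" if "ereal 0 < ereal Y" "ereal Y < ereal 1" for Y
    using that by (auto intro!: continuous_intros)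
  have nn: "AE Y in lborel. ereal 0 < ereal Y \<longrightarrow> ereal Y < ereal 1 \<longrightarrow> 0 \<le> 1 / (1 - Y) powr m"
    by auto
  have A: "((F \<circ> real_of_ereal) \<longlongrightarrow> - 1 / (1 - m)) (at_right (ereal 0))"
    unfolding ereal_tendsto_simps1 F_def using m by (auto intro!: tendsto_eq_intros)
  have B: "((F \<circ> real_of_ereal) \<longlongrightarrow> 0) (at_left (ereal 1))"
  proof -
    have L: "((\<lambda>Y::real. (1 - Y) powr (1 - m)) \<longlongrightarrow> 0) (at_left 1)"
      using m by (auto intro!: tendsto_eq_intros tendsto_zero_powrI eventually_at_leftI[of 0 1])
    have "((\<lambda>Y::real. -((1 - Y) powr (1 - m)) / (1 - m)) \<longlongrightarrow> -0 / (1 - m)) (at_left 1)"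
      using m by (intro tendsto_divide tendsto_minus L tendsto_const) auto
    then show ?thesis unfolding ereal_tendsto_simps1 F_def by simp
  qed
  note r = interval_integral_FTC_nonneg[OF _ d c nn A B]
  show "set_integrable lborel (einterval (ereal 0) (ereal 1)) (\<lambda>Y. 1 / (1 - Y) powr m)"
    "(LBINT Y=ereal 0..ereal 1. 1 / (1 - Y) powr m) = 1 / (1 - m)"
    using r by auto
qed

lemma p2_int:
  fixes m Z :: real assumes m: "0 < m" "m < 1" and Z: "1 < Z"
  shows "set_integrable lborel (einterval (ereal 1) (ereal Z)) (\<lambda>Y. 1 / (Y - 1) powr m)"
    "(LBINT Y=ereal 1..ereal Z. 1 / (Y - 1) powr m) = (Z - 1) powr (1 - m) / (1 - m)"
proof -
  define F where "F = (\<lambda>Y::real. (Y - 1) powr (1 - m) / (1 - m))"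
  have d: "(F has_real_derivative 1 / (Y - 1) powr m) (at Y)" if "ereal 1 < ereal Y" "ereal Y < ereal Z" for Y
    unfolding F_def using that m by (intro deriv_R) auto
  have c: "isCont (\<lambda>Y. 1 / (Y - 1) powr m) Y" if "ereal 1 < ereal Y" "ereal Y < ereal Z" for Y
    using that by (auto intro!: continuous_intros)
  have nn: "AE Y in lborel. ereal 1 < ereal Y \<longrightarrow> ereal Y < ereal Z \<longrightarrow> 0 \<le> 1 / (Y - 1) powr m"
    by auto
  have A: "((F \<circ> real_of_ereal) \<longlongrightarrow> 0) (at_right (ereal 1))"
  proof -
    have L: "((\<lambda>Y::real. (Y - 1) powr (1 - m)) \<longlongrightarrow> 0) (at_right 1)"
      using m by (auto intro!: tendsto_eq_intros tendsto_zero_powrI eventually_at_rightI[of 1 2])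
    have "((\<lambda>Y::real. (Y - 1) powr (1 - m) / (1 - m)) \<longlongrightarrow> 0 / (1 - m)) (at_right 1)"
      using m by (intro tendsto_divide L tendsto_const) auto
    then show ?thesis unfolding ereal_tendsto_simps1 F_def by simp
  qed
  have B: "((F \<circ> real_of_ereal) \<longlongrightarrow> F Z) (at_left (ereal Z))"
    unfolding ereal_tendsto_simps1 F_def using Z m by (auto intro!: tendsto_eq_intros)
  note r = interval_integral_FTC_nonneg[OF _ d c nn A B]
  show "set_integrable lborel (einterval (ereal 1) (ereal Z)) (\<lambda>Y. 1 / (Y - 1) powr m)"
    "(LBINT Y=ereal 1..ereal Z. 1 / (Y - 1) powr m) = (Z - 1) powr (1 - m) / (1 - m)"
    using r Z by (auto simp: F_def)
qed

lemma int_right: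
  fixes m Z c :: real assumes m: "0 < m" "m < 1" and Z: "1 < Z"
  shows "(LBINT Y=ereal 0..ereal Z. (indicator {Y. Y < 1} Y + indicator {Y. Y > 1} Y * c) / \<bar>1 - Y\<bar> powr m)
         = (1 + c * (Z - 1) powr (1 - m)) / (1 - m)"
proof -
  define h where "h = (\<lambda>Y::real. (indicator {Y. Y < 1} Y + indicator {Y. Y > 1} Y * c) / \<bar>1 - Y\<bar> powr m)"
  note P1 = p1_int[OF m] and P2 = p2_int[OF m Z]
  have pw: "indicator (einterval (ereal 0) (ereal Z)) Y *\<^sub>R h Y
      = indicator (einterval (ereal 0) (ereal 1)) Y * (1 / (1 - Y) powr m)
        + c * (indicator (einterval (ereal 1) (ereal Z)) Y * (1 / (Y - 1) powr m))" for Y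
    unfolding h_def using Z by (auto simp: einterval_iff split: split_indicator)
  have le: "ereal 0 \<le> ereal Z" using Z by simp
  have le1: "ereal 0 \<le> ereal 1" "ereal 1 \<le> ereal Z" using Z by auto
  define g1 where "g1 = (\<lambda>Y. indicator (einterval (ereal 0) (ereal 1)) Y * (1 / (1 - Y) powr m))"
  define g2 where "g2 = (\<lambda>Y. indicator (einterval (ereal 1) (ereal Z)) Y * (1 / (Y - 1) powr m))"
  have i1: "integrable lborel g1" using P1(1) unfolding set_integrable_def g1_def by simp
  have i2: "integrable lborel g2" using P2(1) unfolding set_integrable_def g2_def by simp
  have v1: "integral\<^sup>L lborel g1 = (LBINT Y=ereal 0..ereal 1. 1 / (1 - Y) powr m)"
    unfolding g1_def interval_lebesgue_integral_le_eq[OF le1(1)] set_lebesgue_integral_def by simp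
  have v2: "integral\<^sup>L lborel g2 = (LBINT Y=ereal 1..ereal Z. 1 / (Y - 1) powr m)"
    unfolding g2_def interval_lebesgue_integral_le_eq[OF le1(2)] set_lebesgue_integral_def by simp
  have "(LBINT Y=ereal 0..ereal Z. h Y) = integral\<^sup>L lborel (\<lambda>Y. g1 Y + c * g2 Y)"
    unfolding interval_lebesgue_integral_le_eq[OF le] set_lebesgue_integral_def pw g1_def g2_def ..
  also have "\<dots> = integral\<^sup>L lborel g1 + c * integral\<^sup>L lborel g2"
    using i1 i2 by (subst Bochner_Integration.integral_add) auto
  also have "\<dots> = (LBINT Y=ereal 0..ereal 1. 1 / (1 - Y) powr m) + c * (LBINT Y=ereal 1..ereal Z. 1 / (Y - 1) powr m)"
    unfolding v1 v2 ..
  also have "\<dots> = (1 + c * (Z - 1) powr (1 - m)) / (1 - m)"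
    unfolding P1(2) P2(2) by (simp add: add_divide_distrib)
  finally show ?thesis unfolding h_def .
qed

theorem mainTheorem4:
  fixes a :: real
  assumes "a < 0"
  defines "\<mu> \<equiv> 1 / (1 - a)"
  defines "\<Omega> \<equiv> (\<lambda>X::real. - sin (pi * \<mu>) * indicator {Y. Y > 1} X / \<bar>1 - X\<bar> powr \<mu>)"
  defines "cl \<equiv> 1 - a"
  defines "c\<omega> \<equiv> (-1::real)"
  defines "U \<equiv> (\<lambda>X::real. LBINT Y=0..X. Hilbert_transform \<Omega> Y)"
  shows "(\<forall>X. X \<noteq> 1 \<longrightarrow> has_Hilbert_transform \<Omega> X
            ((indicator {Y. Y < 1} X + indicator {Y. Y > 1} X * cos (pi * \<mu>)) / \<bar>1 - X\<bar> powr \<mu>))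
       \<and> (\<forall>X. X \<noteq> 1 \<longrightarrow> (\<exists>d\<Omega> dU. (\<Omega> has_real_derivative d\<Omega>) (at X)
                 \<and> (U has_real_derivative dU) (at X)
                 \<and> (cl * X + a * U X) * d\<Omega> = (c\<omega> + dU) * \<Omega> X))"
proof -
  have b: "1 < 1 - a" using assms(1) by simp
  have m: "0 < \<mu>" "\<mu> < 1" using b unfolding \<mu>_def by (auto simp: field_simps)
  define c where "c = cos (pi * \<mu>)"
  define S where "S = sin (pi * \<mu>)"
  define hH where "hH = (\<lambda>X::real. (indicator {Y. Y < 1} X + indicator {Y. Y > 1} X * cos (pi * \<mu>)) / \<bar>1 - X\<bar> powr \<mu>)"
  have HT: "has_Hilbert_transform \<Omega> X (hH X)" if "X \<noteq> 1" for X
  proof (cases "X < 1")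
    case True
    then show ?thesis using HT_left[OF m True] unfolding \<Omega>_def hH_def by simp
  next
    case False
    then have "X > 1" using that by simp
    then show ?thesis using HT_right[OF m \<open>X > 1\<close>] unfolding \<Omega>_def hH_def by simp
  qed
  have HTv: "Hilbert_transform \<Omega> X = hH X" if "X \<noteq> 1" for X
    using HT[OF that] by (rule Hilbert_transform_eq)
  have Ueq: "U Z = (LBINT Y=0..Z. hH Y)" for Z
    unfolding U_def
    by (rule interval_integral_discrete_difference[where X="{1}"]) (auto simp: HTv)
  define \<Phi>1 where "\<Phi>1 = (\<lambda>Z::real. 1 / (1 - \<mu>) + -((1 - Z) powr (1 - \<mu>)) / (1 - \<mu>))"
  define \<Phi>2 where "\<Phi>2 = (\<lambda>Z::real. 1 / (1 - \<mu>) + c * ((Z - 1) powr (1 - \<mu>) / (1 - \<mu>)))"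
  have U1: "U Z = \<Phi>1 Z" if "Z < 1" for Z
  proof -
    have "U Z = (LBINT Y=ereal 0..ereal Z. hH Y)" unfolding Ueq by (simp add: zero_ereal_def)
    also have "\<dots> = (LBINT Y=ereal 0..ereal Z. 1 / (1 - Y) powr \<mu>)"
      by (rule interval_integral_cong) (use that in \<open>auto simp: hH_def einterval_iff min_def max_def split: if_splits\<close>)
    also have "\<dots> = \<Phi>1 Z" unfolding int_left[OF m that] \<Phi>1_def using m by (simp add: diff_divide_distrib)
    finally show ?thesis .
  qed
  have U2: "U Z = \<Phi>2 Z" if "Z > 1" for Z
  proof -
    have "U Z = (LBINT Y=ereal 0..ereal Z. hH Y)" unfolding Ueq by (simp add: zero_ereal_def)
    also have "\<dots> = \<Phi>2 Z" unfolding hH_def int_right[OF m that] \<Phi>2_def c_def using m by (simp add: add_divide_distrib)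
    finally show ?thesis .
  qed
  have part2: "\<exists>d\<Omega> dU. (\<Omega> has_real_derivative d\<Omega>) (at X)
                 \<and> (U has_real_derivative dU) (at X)
                 \<and> (cl * X + a * U X) * d\<Omega> = (c\<omega> + dU) * \<Omega> X" if X: "X \<noteq> 1" for X
  proof (cases "X < 1")
    case True
    have ev1: "eventually (\<lambda>Z. Z < 1) (nhds X)"
      using eventually_nhds_in_open[of "{..<1}" X] True by auto
    have evO: "eventually (\<lambda>Z. (\<lambda>_. 0) Z = \<Omega> Z) (nhds X)"
      using ev1 by (rule eventually_mono) (simp add: \<Omega>_def)
    have dO: "(\<Omega> has_real_derivative 0) (at X)"
      using DERIV_const[of "0::real" "at X"] by (subst (asm) DERIV_cong_ev[OF refl evO refl])
    have evU: "eventually (\<lambda>Z. \<Phi>1 Z = U Z) (nhds X)"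
      using eventually_nhds_in_open[of "{..<1}" X] True
      by (auto elim!: eventually_mono simp: U1)
    have dP: "(\<Phi>1 has_real_derivative 0 + 1 / (1 - X) powr \<mu>) (at X)"
      unfolding \<Phi>1_def by (intro DERIV_add DERIV_const deriv_L) (use m True in auto)
    have dU: "(U has_real_derivative 0 + 1 / (1 - X) powr \<mu>) (at X)"
      using dP by (subst (asm) DERIV_cong_ev[OF refl evU refl])
    have "\<Omega> X = 0" using True by (simp add: \<Omega>_def)
    then show ?thesis using dO dU by auto
  next
    case False
    then have X1: "X > 1" using X by simp
    define t where "t = X - 1"
    have t: "t > 0" using X1 by (simp add: t_def)
    have evO: "eventually (\<lambda>Z. - S * (Z - 1) powr (-\<mu>) = \<Omega> Z) (nhds X)"
      using eventually_nhds_in_open[of "{1<..}" X] X1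
      by (auto elim!: eventually_mono simp: \<Omega>_def S_def powr_minus_divide)
    have d0: "((\<lambda>Y. Y - 1) has_real_derivative 1) (at X)" by (auto intro!: derivative_eq_intros)
    have d1: "((\<lambda>Z. (Z - 1) powr (-\<mu>)) has_real_derivative (-\<mu>) * (X - 1) powr (-\<mu> - of_nat 1) * 1) (at X)"
      using DERIV_fun_powr[OF d0, of "-\<mu>"] X1 by simp
    have d2: "((\<lambda>Z. - S * (Z - 1) powr (-\<mu>)) has_real_derivative - S * ((-\<mu>) * (X - 1) powr (-\<mu> - of_nat 1) * 1)) (at X)"
      by (intro DERIV_cmult d1)
    have dO: "(\<Omega> has_real_derivative - S * ((-\<mu>) * (X - 1) powr (-\<mu> - of_nat 1) * 1)) (at X)"
      using d2 by (subst (asm) DERIV_cong_ev[OF refl evO refl])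
    have evU: "eventually (\<lambda>Z. \<Phi>2 Z = U Z) (nhds X)"
      using eventually_nhds_in_open[of "{1<..}" X] X1
      by (auto elim!: eventually_mono simp: U2)
    have dP: "(\<Phi>2 has_real_derivative 0 + c * (1 / (X - 1) powr \<mu>)) (at X)"
      unfolding \<Phi>2_def by (intro DERIV_add DERIV_const DERIV_cmult deriv_R) (use m X1 in auto)
    have dU: "(U has_real_derivative 0 + c * (1 / (X - 1) powr \<mu>)) (at X)"
      using dP by (subst (asm) DERIV_cong_ev[OF refl evU refl])
    define P where "P = t powr \<mu>"
    have P: "P > 0" using t by (simp add: P_def)
    have e1: "(X - 1) powr (-\<mu> - of_nat 1) = 1 / (P * t)"
      using t by (simp add: P_def t_def powr_diff powr_minus_divide)
    have e2: "(X - 1) powr (1 - \<mu>) = t / P"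
      using t by (simp add: P_def t_def powr_diff)
    have e3: "\<Omega> X = - S / P" using X1 by (simp add: \<Omega>_def S_def P_def t_def)
    have e4: "U X = 1 / (1 - \<mu>) + c * (t / P / (1 - \<mu>))" using U2[OF X1] e2 by (simp add: \<Phi>2_def)
    have Xt: "X = 1 + t" by (simp add: t_def)
    have b0: "1 - a \<noteq> 0" "a \<noteq> 0" using assms(1) by auto
    have eq: "(cl * X + a * U X) * (- S * ((-\<mu>) * (1 / (P * t)) * 1)) = (c\<omega> + (0 + c * (1 / P))) * (- S / P)"
      unfolding e4 unfolding Xt cl_def c\<omega>_def \<mu>_def using P t b0
      by (simp add: field_simps)
    have dO': "(\<Omega> has_real_derivative - S * ((-\<mu>) * (1 / (P * t)) * 1)) (at X)"
      using dO unfolding e1 .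
    have dU': "(U has_real_derivative 0 + c * (1 / P)) (at X)"
      using dU unfolding P_def t_def .
    have eq': "(cl * X + a * U X) * (- S * ((-\<mu>) * (1 / (P * t)) * 1)) = (c\<omega> + (0 + c * (1 / P))) * \<Omega> X"
      unfolding e3 by (rule eq)
    show ?thesis using dO' dU' eq' by blast
  qed
  show ?thesis using HT part2 unfolding hH_def by auto
qed

end
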